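(* Let $\Delta$ be a pure $d$-dimensional APC simplicial complex, $0\le i<d$, let $\Upsilon$ be an $i$-dimensional spanning tree of $\Delta$ with $\tilde H_{i-1}(\Upsilon;\mathbb{Z})=0$, and let $\Theta=\Delta_i\setminus\Upsilon_i$. Then, with $L=L_{\Delta,i}$, $$L\big(C_i(\Delta;\mathbb{Z})\big)=L\big(C_i(\Theta;\mathbb{Z})\big),$$ where $C_i(\Theta;\mathbb{Z})\subseteq C_i(\Delta;\mathbb{Z})$ is the span of the faces in $\Theta$.
   Context: For a finite simplicial complex $\Delta$, $\Delta_i$ is its set of $i$-faces, $\Delta_{(i)}$ its $i$-skeleton, $f_i=|\Delta_i|$. $C_i(\Delta;\mathbb{Z})$ is free abelian on the (fixed-orientation) $i$-faces, $\partial_{\Delta,i}$ the simplicial boundary map, and $\partial^*_{\Delta,i}$ its transpose. The combinatorial Laplacian is $L_{\Delta,i}=\partial_{i+1}\partial^*_{i+1}:C_i(\Delta;\mathbb{Z})\to C_i(\Delta;\mathbb{Z})$. $\tilde H$ is reduced homology, $\beta_i=\dim_\mathbb{Q}\tilde H_i(\cdot;\mathbb{Q})$. A pure $d$-dimensional complex is APC if $\tilde H_j(\Delta;\mathbb{Q})=0$ for all $j<d$. For a pure $k$-dimensional complex $\Gamma$, a subcomplex $\Upsilon$ with $\Upsilon_{(k-1)}=\Gamma_{(k-1)}$ is a spanning tree if $\tilde H_k(\Upsilon;\mathbb{Z})=0$, $\tilde H_{k-1}(\Upsilon;\mathbb{Q})=0$, and $f_k(\Upsilon)=f_k(\Gamma)-\beta_k(\Gamma)+\beta_{k-1}(\Gamma)$;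 an $i$-dimensional spanning tree of $\Delta$ is a spanning tree of $\Delta_{(i)}$. *)

theory Defs
  imports Complex_Main "HOL-Library.Function_Algebras"
begin

text \<open>Faces are finite vertex sets;
  the empty face is included (it is the unique face of dimension -1), so that the chain
  complex below is the augmented one and its homology is reduced homology.
  Orientation of a face is fixed by the order of the vertices.\<close>

definition simplicial_complex :: "'a set set \<Rightarrow> bool" where
  "simplicial_complex K \<longleftrightarrow> finite K \<and> {} \<in> K \<and> (\<forall>F\<in>K. finite F \<and> (\<forall>G. G \<subseteq> F \<longrightarrow> G \<in> K))"

definition faces :: "'a set set \<Rightarrow> int \<Rightarrow> 'a set set" where
  "faces K j = {F \<in> K. int (card F) = j + 1}"

definition skel :: "'a set set \<Rightarrow> int \<Rightarrow> 'a set set" where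
  "skel K j = {F \<in> K. int (card F) \<le> j + 1}"

definition pure :: "'a set set \<Rightarrow> int \<Rightarrow> bool" where
  "pure K d \<longleftrightarrow> (\<forall>F\<in>K. int (card F) \<le> d + 1) \<and> (\<forall>F\<in>K. \<exists>G\<in>faces K d. F \<subseteq> G)"

definition chains_on :: "'a set set \<Rightarrow> ('a set \<Rightarrow> 'r::comm_ring_1) set" where
  "chains_on S = {c. \<forall>F. F \<notin> S \<longrightarrow> c F = 0}"

definition chains :: "'a set set \<Rightarrow> int \<Rightarrow> ('a set \<Rightarrow> 'r::comm_ring_1) set" where
  "chains K j = chains_on (faces K j)"

definition sgn_face :: "'a::linorder set \<Rightarrow> 'a set \<Rightarrow> 'r::comm_ring_1" where
  "sgn_face F G = (-1) ^ card {u \<in> F. u < the_elem (F - G)}"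

definition bd :: "'a::linorder set set \<Rightarrow> int \<Rightarrow> ('a set \<Rightarrow> 'r::comm_ring_1) \<Rightarrow> ('a set \<Rightarrow> 'r)" where
  "bd K j c = (\<lambda>G. if G \<in> faces K (j - 1)
      then (\<Sum>F\<in>{F \<in> faces K j. G \<subseteq> F}. sgn_face F G * c F) else 0)"

definition cobd :: "'a::linorder set set \<Rightarrow> int \<Rightarrow> ('a set \<Rightarrow> 'r::comm_ring_1) \<Rightarrow> ('a set \<Rightarrow> 'r)" where
  "cobd K j c = (\<lambda>F. if F \<in> faces K j
      then (\<Sum>G\<in>{G \<in> faces K (j - 1). G \<subseteq> F}. sgn_face F G * c G) else 0)"

definition laplacian :: "'a::linorder set set \<Rightarrow> int \<Rightarrow> ('a set \<Rightarrow> 'r::comm_ring_1) \<Rightarrow> ('a set \<Rightarrow> 'r)" where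
  "laplacian K i = bd K (i + 1) \<circ> cobd K (i + 1)"

definition cycles :: "'a::linorder set set \<Rightarrow> int \<Rightarrow> ('a set \<Rightarrow> 'r::comm_ring_1) set" where
  "cycles K j = {c \<in> chains K j. bd K j c = (\<lambda>_. 0)}"

definition boundaries :: "'a::linorder set set \<Rightarrow> int \<Rightarrow> ('a set \<Rightarrow> 'r::comm_ring_1) set" where
  "boundaries K j = bd K (j + 1) ` chains K (j + 1)"

definition homology_vanishes :: "'r::comm_ring_1 itself \<Rightarrow> 'a::linorder set set \<Rightarrow> int \<Rightarrow> bool" where
  "homology_vanishes _ K j \<longleftrightarrow> (cycles K j :: ('a set \<Rightarrow> 'r) set) = boundaries K j"

definition betti :: "'a::linorder set set \<Rightarrow> int \<Rightarrow> int" where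
  "betti K j = int (vector_space.dim (\<lambda>(a::rat) f x. a * f x) (cycles K j :: ('a set \<Rightarrow> rat) set))
             - int (vector_space.dim (\<lambda>(a::rat) f x. a * f x) (boundaries K j :: ('a set \<Rightarrow> rat) set))"

definition APC :: "'a::linorder set set \<Rightarrow> int \<Rightarrow> bool" where
  "APC K d \<longleftrightarrow> pure K d \<and> (\<forall>j<d. homology_vanishes TYPE(rat) K j)"

definition spanning_tree :: "'a::linorder set set \<Rightarrow> int \<Rightarrow> 'a set set \<Rightarrow> bool" where
  "spanning_tree \<Gamma> k \<Upsilon> \<longleftrightarrow> simplicial_complex \<Upsilon> \<and> \<Upsilon> \<subseteq> \<Gamma> \<and>
     skel \<Upsilon> (k - 1) = skel \<Gamma> (k - 1) \<and>
     homology_vanishes TYPE(int) \<Upsilon> k \<and> homology_vanishes TYPE(rat) \<Upsilon> (k - 1) \<and>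
     int (card (faces \<Upsilon> k)) = int (card (faces \<Gamma> k)) - betti \<Gamma> k + betti \<Gamma> (k - 1)"

end

theory Submission
  imports Defs
begin

lemma sgn_two:
  fixes G :: "'a::linorder set" and u v :: 'a
  assumes fin: "finite G" and uv: "u < v" and uG: "u \<notin> G" and vG: "v \<notin> G"
  shows "(sgn_face (insert u (insert v G)) (insert v G) :: 'r::comm_ring_1) * sgn_face (insert v G) G
       + sgn_face (insert u (insert v G)) (insert u G) * sgn_face (insert u G) G = 0"
proof -
  let ?F = "insert u (insert v G)"
  have d1: "?F - insert v G = {u}" using uv uG vG by auto
  have d2: "insert v G - G = {v}" using vG by auto
  have d3: "?F - insert u G = {v}" using uv uG vG by auto
  have d4: "insert u G - G = {u}" using uG by auto
  have s1: "{x \<in> ?F. x < u} = {x\<in>G. x < u}" using uv by auto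
  have s2: "{x \<in> insert v G. x < v} = {x\<in>G. x < v}" by auto
  have s3: "{x \<in> ?F. x < v} = insert u {x\<in>G. x < v}" using uv by auto
  have s4: "{x \<in> insert u G. x < u} = {x\<in>G. x < u}" by auto
  have c3: "card (insert u {x\<in>G. x < v}) = Suc (card {x\<in>G. x < v})"
    using fin uG by simp
  show ?thesis
    unfolding sgn_face_def d1 d2 d3 d4 the_elem_eq s1 s2 s3 s4 c3
    by (simp add: algebra_simps)
qed

lemma inner_zero:
  fixes K :: "'a::linorder set set"
  assumes K: "simplicial_complex K" and F: "F \<in> faces K (m+1)" and G: "G \<in> faces K (m-1)"
    and GF: "G \<subseteq> F"
  shows "(\<Sum>H\<in>{H \<in> faces K m. G \<subseteq> H \<and> H \<subseteq> F}. (sgn_face F H::'r::comm_ring_1) * sgn_face H G) = 0"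
proof -
  have FK: "F \<in> K" and finF: "finite F" using F K unfolding faces_def simplicial_complex_def by auto
  have down: "\<And>A B. A \<in> K \<Longrightarrow> B \<subseteq> A \<Longrightarrow> B \<in> K"
    using K unfolding simplicial_complex_def by blast
  have finG: "finite G" using finF GF finite_subset by blast
  have cF: "card F = card G + 2" using F G unfolding faces_def by auto
  have "card (F - G) = 2" using cF finG GF by (simp add: card_Diff_subset)
  then obtain p q where pq: "p \<noteq> q" "F - G = {p, q}" by (auto simp: card_2_iff)
  obtain u v where uv: "u < v" "F - G = {u, v}"
  proof (cases "p < q")
    case True then show ?thesis using that pq by blast
  next
    case False then have "q < p" using pq by auto
    then show ?thesis using that[of q p] pq by (auto simp: insert_commute)
  qed
  have uG: "u \<notin> G" and vG: "v \<notin> G" using uv by auto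
  have Feq: "F = insert u (insert v G)" using uv GF by auto
  have cH: "\<And>H. H \<in> faces K m \<longleftrightarrow> H \<in> K \<and> card H = Suc (card G)"
    using G unfolding faces_def by auto
  have set_eq: "{H \<in> faces K m. G \<subseteq> H \<and> H \<subseteq> F} = {insert v G, insert u G}"
  proof (intro set_eqI iffI)
    fix H assume "H \<in> {H \<in> faces K m. G \<subseteq> H \<and> H \<subseteq> F}"
    then have H: "H \<in> K" "card H = Suc (card G)" "G \<subseteq> H" "H \<subseteq> F" using cH by auto
    have finH: "finite H" using H(4) finF finite_subset by blast
    show "H \<in> {insert v G, insert u G}"
    proof (cases "u \<in> H")
      case True
      show ?thesis
      proof (cases "v \<in> H")
        case True
        with \<open>u \<in> H\<close> H have "H = F" using Feq by auto
        then show ?thesis using H cF by simp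
      next
        case False
        with \<open>u \<in> H\<close> H Feq have "H = insert u G" by auto
        then show ?thesis by simp
      qed
    next
      case False
      show ?thesis
      proof (cases "v \<in> H")
        case True
        with \<open>u \<notin> H\<close> H Feq have "H = insert v G" by auto
        then show ?thesis by simp
      next
        case False
        with \<open>u \<notin> H\<close> H Feq have "H = G" by auto
        then show ?thesis using H by simp
      qed
    qed
  next
    fix H assume "H \<in> {insert v G, insert u G}"
    moreover have "insert v G \<in> K" "insert u G \<in> K"
      using down[OF FK, of "insert v G"] down[OF FK, of "insert u G"] Feq by auto
    moreover have "card (insert v G) = Suc (card G)" "card (insert u G) = Suc (card G)"
      using finG uG vG by simp_all
    moreover have "insert v G \<subseteq> F" "insert u G \<subseteq> F" using Feq by auto
    ultimately show "H \<in> {H \<in> faces K m. G \<subseteq> H \<and> H \<subseteq> F}"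
      using cH[of H] by auto
  qed
  have ne: "insert v G \<noteq> insert u G" using uv uG vG by auto
  show ?thesis unfolding set_eq using sgn_two[OF finG uv(1) uG vG] ne Feq by simp
qed


lemma finite_faces: "simplicial_complex K \<Longrightarrow> finite (faces K j)"
  unfolding simplicial_complex_def faces_def by auto

lemma bd_bd:
  fixes K :: "'a::linorder set set" and c :: "'a set \<Rightarrow> 'r::comm_ring_1"
  assumes K: "simplicial_complex K"
  shows "bd K (j - 1) (bd K j c) G = 0"
proof (cases "G \<in> faces K (j - 1 - 1)")
  case False then show ?thesis unfolding bd_def by simp
next
  case True
  let ?A = "{H \<in> faces K (j - 1). G \<subseteq> H}"
  let ?B = "faces K j"
  have "bd K (j - 1) (bd K j c) G
     = (\<Sum>H\<in>?A. \<Sum>F\<in>{F \<in> ?B. H \<subseteq> F}. sgn_face H G * (sgn_face F H * c F))"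
    using True unfolding bd_def by (simp add: sum_distrib_left)
  also have "\<dots> = (\<Sum>F\<in>?B. \<Sum>H\<in>{H \<in> ?A. H \<subseteq> F}. sgn_face H G * (sgn_face F H * c F))"
    by (rule sum.swap_restrict) (use finite_faces[OF K] in auto)
  also have "\<dots> = (\<Sum>F\<in>?B. 0)"
  proof (rule sum.cong[OF refl])
    fix F assume F: "F \<in> ?B"
    show "(\<Sum>H\<in>{H \<in> ?A. H \<subseteq> F}. sgn_face H G * (sgn_face F H * c F)) = 0"
    proof (cases "G \<subseteq> F")
      case False
      then have "{H \<in> ?A. H \<subseteq> F} = {}" by auto
      then show ?thesis by (metis sum.empty)
    next
      case GF: True
      have e: "{H \<in> ?A. H \<subseteq> F} = {H \<in> faces K (j - 1). G \<subseteq> H \<and> H \<subseteq> F}" by auto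
      have F': "F \<in> faces K (j - 1 + 1)" using F by simp
      have "(\<Sum>H\<in>{H \<in> ?A. H \<subseteq> F}. sgn_face H G * (sgn_face F H * c F))
          = c F * (\<Sum>H\<in>{H \<in> faces K (j - 1). G \<subseteq> H \<and> H \<subseteq> F}. sgn_face F H * sgn_face H G)"
        unfolding e by (simp add: sum_distrib_left algebra_simps)
      also have "\<dots> = 0" by (simp add: inner_zero[OF K F' True GF])
      finally show ?thesis .
    qed
  qed
  finally show ?thesis by simp
qed

lemma cobd_cobd:
  fixes K :: "'a::linorder set set" and b :: "'a set \<Rightarrow> 'r::comm_ring_1"
  assumes K: "simplicial_complex K"
  shows "cobd K (j + 1) (cobd K j b) F = 0"
proof (cases "F \<in> faces K (j + 1)")
  case False then show ?thesis unfolding cobd_def by simp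
next
  case True
  let ?A = "{H \<in> faces K j. H \<subseteq> F}"
  let ?C = "faces K (j - 1)"
  have "cobd K (j + 1) (cobd K j b) F
     = (\<Sum>H\<in>?A. \<Sum>G\<in>{G \<in> ?C. G \<subseteq> H}. sgn_face F H * (sgn_face H G * b G))"
    using True unfolding cobd_def by (simp add: sum_distrib_left)
  also have "\<dots> = (\<Sum>G\<in>?C. \<Sum>H\<in>{H \<in> ?A. G \<subseteq> H}. sgn_face F H * (sgn_face H G * b G))"
    by (rule sum.swap_restrict) (use finite_faces[OF K] in auto)
  also have "\<dots> = (\<Sum>G\<in>?C. 0)"
  proof (rule sum.cong[OF refl])
    fix G assume G: "G \<in> ?C"
    show "(\<Sum>H\<in>{H \<in> ?A. G \<subseteq> H}. sgn_face F H * (sgn_face H G * b G)) = 0"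
    proof (cases "G \<subseteq> F")
      case False
      then have "{H \<in> ?A. G \<subseteq> H} = {}" by auto
      then show ?thesis by (metis sum.empty)
    next
      case GF: True
      have e: "{H \<in> ?A. G \<subseteq> H} = {H \<in> faces K j. G \<subseteq> H \<and> H \<subseteq> F}" by auto
      have "(\<Sum>H\<in>{H \<in> ?A. G \<subseteq> H}. sgn_face F H * (sgn_face H G * b G))
          = b G * (\<Sum>H\<in>{H \<in> faces K j. G \<subseteq> H \<and> H \<subseteq> F}. sgn_face F H * sgn_face H G)"
        unfolding e by (simp add: sum_distrib_left algebra_simps)
      also have "\<dots> = 0" by (simp add: inner_zero[OF K True G GF])
      finally show ?thesis .
    qed
  qed
  finally show ?thesis by simp
qed

definition pr :: "'b set \<Rightarrow> ('b \<Rightarrow> int) \<Rightarrow> ('b \<Rightarrow> int) \<Rightarrow> int" where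
  "pr S w x = (\<Sum>y\<in>S. w y * x y)"

lemma pr_diff_right: "pr S w (\<lambda>y. x y - r * z y) = pr S w x - r * pr S w z"
  unfolding pr_def by (simp add: algebra_simps sum_subtractf sum_distrib_left)
lemma pr_diff_left: "pr S (\<lambda>y. w y - r * v y) x = pr S w x - r * pr S v x"
  unfolding pr_def by (simp add: algebra_simps sum_subtractf sum_distrib_left)
lemma pr_minus_left: "pr S (\<lambda>y. w y - v y) x = pr S w x - pr S v x"
  unfolding pr_def by (simp add: algebra_simps sum_subtractf)
lemma pr_sum_right: "pr S w (\<lambda>y. \<Sum>l\<in>J. f l * v l y) = (\<Sum>l\<in>J. f l * pr S w (v l))"
  unfolding pr_def by (simp add: sum_distrib_left algebra_simps sum.swap[of _ S])
lemma pr_sum_left: "pr S (\<lambda>y. \<Sum>l\<in>J. f l * v l y) x = (\<Sum>l\<in>J. f l * pr S (v l) x)"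
  unfolding pr_def by (simp add: sum_distrib_left sum_distrib_right algebra_simps sum.swap[of _ S])
lemma pr_scale_right: "pr S w (\<lambda>y. k * x y) = k * pr S w x"
  unfolding pr_def by (simp add: sum_distrib_left algebra_simps)
lemma pr_cong_right: "(\<And>y. x y = z y) \<Longrightarrow> pr S w x = pr S w z"
proof -
  assume "\<And>y. x y = z y" then have "x = z" by (rule ext) then show ?thesis by simp
qed

lemma sum_delta_mult:
  "finite J \<Longrightarrow> j0 \<in> J \<Longrightarrow> (\<Sum>j\<in>J. (if j = j0 then r else 0) * (f j :: int)) = r * f j0"
proof -
  assume "finite J" "j0 \<in> J"
  have "(\<Sum>j\<in>J. (if j = j0 then r else 0) * f j) = (\<Sum>j\<in>J. if j = j0 then r * f j else 0)"
    by (rule sum.cong) auto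
  also have "\<dots> = r * f j0" using \<open>finite J\<close> \<open>j0 \<in> J\<close> by (simp add: sum.delta')
  finally show ?thesis .
qed

lemma bezout_set:
  fixes f :: "'b \<Rightarrow> int"
  assumes "finite S" shows "\<exists>u. (\<Sum>y\<in>S. u y * f y) = Gcd (f ` S)"
  using assms
proof (induction S rule: finite_induct)
  case empty then show ?case by simp
next
  case (insert y S)
  then obtain u where u: "(\<Sum>y\<in>S. u y * f y) = Gcd (f ` S)" by blast
  obtain p q where pq: "p * f y + q * Gcd (f ` S) = gcd (f y) (Gcd (f ` S))"
    using bezout_int by blast
  let ?u = "(\<lambda>z. q * u z)(y := p)"
  have "(\<Sum>z\<in>insert y S. ?u z * f z) = p * f y + (\<Sum>z\<in>S. q * u z * f z)"
    using insert by (simp add: sum.insert) (rule sum.cong, auto)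
  also have "\<dots> = p * f y + q * Gcd (f ` S)"
  proof -
    have "(\<Sum>z\<in>S. q * u z * f z) = q * (\<Sum>z\<in>S. u z * f z)" by (simp add: sum_distrib_left mult.assoc)
    then show ?thesis using u by simp
  qed
  finally show ?case using pq by auto
qed

definition supp :: "'b set \<Rightarrow> 'j set \<Rightarrow> ('j \<Rightarrow> 'b \<Rightarrow> int) \<Rightarrow> bool" where
  "supp S J a \<longleftrightarrow> (\<forall>j\<in>J. \<forall>y. y \<notin> S \<longrightarrow> a j y = 0)"
definition indep :: "'j set \<Rightarrow> ('j \<Rightarrow> 'b \<Rightarrow> int) \<Rightarrow> bool" where
  "indep J a \<longleftrightarrow> (\<forall>c. (\<forall>y. (\<Sum>j\<in>J. c j * a j y) = 0) \<longrightarrow> (\<forall>j\<in>J. c j = 0))"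
definition purev :: "'j set \<Rightarrow> ('j \<Rightarrow> 'b \<Rightarrow> int) \<Rightarrow> bool" where
  "purev J a \<longleftrightarrow> (\<forall>k x c. k \<noteq> 0 \<longrightarrow> (\<forall>y. k * x y = (\<Sum>j\<in>J. c j * a j y))
      \<longrightarrow> (\<exists>c'. \<forall>y. x y = (\<Sum>j\<in>J. c' j * a j y)))"

lemma indepD: "indep J a \<Longrightarrow> (\<And>y. (\<Sum>j\<in>J. c j * a j y) = 0) \<Longrightarrow> j \<in> J \<Longrightarrow> c j = 0"
  unfolding indep_def by blast
lemma purevD: "purev J a \<Longrightarrow> k \<noteq> 0 \<Longrightarrow> (\<And>y. k * x y = (\<Sum>j\<in>J. c j * a j y))
   \<Longrightarrow> \<exists>c'. \<forall>y. x y = (\<Sum>j\<in>J. c' j * a j y)"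
  unfolding purev_def by blast

lemma primitive:
  fixes a :: "'j \<Rightarrow> 'b \<Rightarrow> int"
  assumes fJ: "finite J" and fS: "finite S" and j0: "j0 \<in> J"
    and sp: "supp S J a" and ind: "indep J a" and pu: "purev J a"
  shows "\<exists>u. pr S u (a j0) = 1"
proof -
  let ?g = "Gcd (a j0 ` S)"
  obtain u where u: "(\<Sum>y\<in>S. u y * a j0 y) = ?g" using bezout_set[OF fS] by blast
  have dv: "?g dvd a j0 y" for y
  proof (cases "y \<in> S")
    case True then show ?thesis by (simp add: Gcd_dvd)
  next
    case False then show ?thesis using sp j0 unfolding supp_def by simp
  qed
  let ?d = "\<lambda>j. if j = j0 then (1::int) else 0"
  have dsum: "(\<Sum>j\<in>J. ?d j * a j y) = a j0 y" for y
    using sum_delta_mult[OF fJ j0, of 1 "\<lambda>j. a j y"] by simp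
  have g0: "?g \<noteq> 0"
  proof
    assume g: "?g = 0"
    have "a j0 y = 0" for y using dv[of y] g by (metis dvd_0_left_iff)
    then have "\<forall>y. (\<Sum>j\<in>J. ?d j * a j y) = 0" using dsum by simp
    then have "?d j0 = 0" using indepD[OF ind _ j0, of ?d] by blast
    then show False by simp
  qed
  let ?x = "\<lambda>y. a j0 y div ?g"
  have "\<forall>y. ?g * ?x y = (\<Sum>j\<in>J. ?d j * a j y)" using dsum dv by simp
  then obtain c' where c': "\<forall>y. ?x y = (\<Sum>j\<in>J. c' j * a j y)"
    using purevD[OF pu g0, of ?x ?d] by blast
  have "\<forall>y. (\<Sum>j\<in>J. (?g * c' j - ?d j) * a j y) = 0"
  proof
    fix y
    have "(\<Sum>j\<in>J. (?g * c' j - ?d j) * a j y) = ?g * (\<Sum>j\<in>J. c' j * a j y) - (\<Sum>j\<in>J. ?d j * a j y)"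
      by (simp add: algebra_simps sum_subtractf sum_distrib_left)
    also have "\<dots> = ?g * ?x y - a j0 y" using c' dsum by simp
    also have "\<dots> = 0" using dv[of y] by simp
    finally show "(\<Sum>j\<in>J. (?g * c' j - ?d j) * a j y) = 0" .
  qed
  then have "?g * c' j0 - ?d j0 = 0" using indepD[OF ind _ j0, of "\<lambda>j. ?g * c' j - ?d j"] by blast
  then have gc: "?g * c' j0 = 1" by simp
  have "pr S (\<lambda>y. c' j0 * u y) (a j0) = c' j0 * ?g"
    unfolding pr_def using u by (simp add: sum_distrib_left[symmetric] mult.assoc)
  then show ?thesis using gc by (metis mult.commute)
qed


lemma dual_basis:
  fixes a :: "'j \<Rightarrow> 'b \<Rightarrow> int"
  assumes fJ: "finite J" and fS: "finite S"
  shows "supp S J a \<Longrightarrow> indep J a \<Longrightarrow> purev J a \<Longrightarrow>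
    \<exists>w. \<forall>j\<in>J. \<forall>l\<in>J. pr S (w j) (a l) = (if j = l then 1 else 0)"
  using fJ
proof (induction J arbitrary: a rule: finite_induct)
  case empty then show ?case by simp
next
  case (insert j0 J)
  note sp = insert.prems(1) and ind = insert.prems(2) and pu = insert.prems(3)
  have fJ': "finite (insert j0 J)" using insert by simp
  obtain u where u: "pr S u (a j0) = 1"
    using primitive[OF fJ' fS _ sp ind pu] by blast
  define b where "b l y = a l y - pr S u (a l) * a j0 y" for l y
  have key: "(\<Sum>l\<in>J. c l * b l y)
      = (\<Sum>j\<in>insert j0 J. (c(j0 := - (\<Sum>l\<in>J. c l * pr S u (a l)))) j * a j y)" for c y
  proof -
    have "(\<Sum>j\<in>insert j0 J. (c(j0 := - (\<Sum>l\<in>J. c l * pr S u (a l)))) j * a j y)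
       = - (\<Sum>l\<in>J. c l * pr S u (a l)) * a j0 y + (\<Sum>j\<in>J. c j * a j y)"
      using insert.hyps by (simp add: sum.insert) (rule sum.cong, auto)
    also have "\<dots> = (\<Sum>l\<in>J. c l * b l y)"
      unfolding b_def by (simp add: algebra_simps sum_subtractf sum_distrib_left sum_distrib_right)
    finally show ?thesis by simp
  qed
  have spb: "supp S J b" using sp unfolding supp_def b_def by auto
  have indb: "indep J b" unfolding indep_def
  proof (intro allI impI ballI)
    fix c l assume h: "\<forall>y. (\<Sum>l\<in>J. c l * b l y) = 0" and l: "l \<in> J"
    let ?c = "c(j0 := - (\<Sum>l\<in>J. c l * pr S u (a l)))"
    have "?c l = 0" using indepD[OF ind, of ?c l] h key l by simp
    moreover have "l \<noteq> j0" using l insert.hyps by auto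
    ultimately show "c l = 0" by simp
  qed
  have prb: "pr S u (b l) = 0" for l
    unfolding b_def by (simp add: pr_diff_right u)
  have pub: "purev J b" unfolding purev_def
  proof (intro allI impI)
    fix k x c assume k: "(k::int) \<noteq> 0" and h: "\<forall>y. k * x y = (\<Sum>l\<in>J. c l * b l y)"
    let ?c = "c(j0 := - (\<Sum>l\<in>J. c l * pr S u (a l)))"
    obtain e where e: "\<forall>y. x y = (\<Sum>j\<in>insert j0 J. e j * a j y)"
      using purevD[OF pu k, of x ?c] h key by auto
    have "k * pr S u x = pr S u (\<lambda>y. \<Sum>l\<in>J. c l * b l y)"
      using h pr_scale_right[of S u k x] by (metis (no_types, lifting) pr_cong_right)
    also have "\<dots> = 0" by (simp add: pr_sum_right prb)
    finally have px: "pr S u x = 0" using k by simp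
    have "pr S u x = (\<Sum>j\<in>insert j0 J. e j * pr S u (a j))"
      using e pr_sum_right[of S u e a "insert j0 J"] by (metis (no_types, lifting) pr_cong_right)
    also have "\<dots> = e j0 + (\<Sum>l\<in>J. e l * pr S u (a l))"
      using insert.hyps u by (simp add: sum.insert)
    finally have e0: "e j0 = - (\<Sum>l\<in>J. e l * pr S u (a l))" using px by simp
    have "e = e(j0 := - (\<Sum>l\<in>J. e l * pr S u (a l)))" using e0 by auto
    then have "\<forall>y. x y = (\<Sum>l\<in>J. e l * b l y)" using e key by metis
    then show "\<exists>c'. \<forall>y. x y = (\<Sum>l\<in>J. c' l * b l y)" by blast
  qed
  obtain psi where psi: "\<forall>j\<in>J. \<forall>l\<in>J. pr S (psi j) (b l) = (if j = l then 1 else 0)"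
    using insert.IH[OF spb indb pub] by blast
  define phi where "phi j y = psi j y - pr S (psi j) (a j0) * u y" for j y
  define w where "w j = (if j = j0 then (\<lambda>y. u y - (\<Sum>l\<in>J. pr S u (a l) * phi l y)) else phi j)" for j
  have f1: "pr S (phi j) (a j0) = 0" for j
    unfolding phi_def by (simp add: pr_diff_left u)
  have f2: "pr S (phi j) (a l) = (if j = l then 1 else 0)" if "j \<in> J" "l \<in> J" for j l
  proof -
    have "pr S (phi j) (a l) = pr S (psi j) (a l) - pr S (psi j) (a j0) * pr S u (a l)"
      unfolding phi_def by (simp add: pr_diff_left)
    also have "\<dots> = pr S (psi j) (b l)"
      unfolding b_def by (simp add: pr_diff_right)
    finally show ?thesis using psi that by simp
  qed
  have f3: "pr S (w j0) (a j0) = 1"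
    unfolding w_def by (simp add: pr_minus_left pr_sum_left u f1)
  have f4: "pr S (w j0) (a m) = 0" if "m \<in> J" for m
  proof -
    have "pr S (w j0) (a m) = pr S u (a m) - (\<Sum>l\<in>J. pr S u (a l) * pr S (phi l) (a m))"
      unfolding w_def by (simp add: pr_minus_left pr_sum_left)
    also have "(\<Sum>l\<in>J. pr S u (a l) * pr S (phi l) (a m)) = (\<Sum>l\<in>J. if l = m then pr S u (a l) else 0)"
      by (rule sum.cong) (auto simp: f2 that)
    also have "\<dots> = pr S u (a m)" using that insert.hyps by (simp add: sum.delta')
    finally show ?thesis by simp
  qed
  have "\<forall>j\<in>insert j0 J. \<forall>l\<in>insert j0 J. pr S (w j) (a l) = (if j = l then 1 else 0)"
  proof (intro ballI)
    fix j l assume j: "j \<in> insert j0 J" and l: "l \<in> insert j0 J"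
    show "pr S (w j) (a l) = (if j = l then 1 else 0)"
    proof (cases "j = j0")
      case True
      then show ?thesis using f3 f4 l insert.hyps by auto
    next
      case False
      then have jJ: "j \<in> J" and wj: "w j = phi j" using j by (auto simp: w_def)
      show ?thesis using f1 f2 l jJ wj False by auto
    qed
  qed
  then show ?case by blast
qed


lemma bd_cong: "(\<And>F. F \<in> faces K j \<Longrightarrow> c F = c' F) \<Longrightarrow> bd K j c = bd K j c'"
  unfolding bd_def by (intro ext if_cong refl sum.cong) auto

lemma bd_scale: "bd K j (\<lambda>F. k * c F) G = k * bd K j c G"
  unfolding bd_def by (simp add: sum_distrib_left algebra_simps)

lemma cobd_minus: "cobd K j (\<lambda>G. x G - y G) F = cobd K j x F - cobd K j y F"
  unfolding cobd_def by (simp add: sum_subtractf algebra_simps)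

lemma cobd_sum:
  "cobd K j (\<lambda>G. \<Sum>F\<in>J. f F * v F G) H = (\<Sum>F\<in>J. f F * cobd K j (v F) H)"
  unfolding cobd_def by (simp add: sum_distrib_left algebra_simps sum.swap[of _ J])

theorem claim4:
  fixes \<Delta> \<Upsilon> :: "'a::linorder set set" and d i :: int
  assumes "simplicial_complex \<Delta>"
    and "APC \<Delta> d"
    and "0 \<le> i" and "i < d"
    and "spanning_tree (skel \<Delta> i) i \<Upsilon>"
    and "homology_vanishes TYPE(int) \<Upsilon> (i - 1)"
  shows "(laplacian \<Delta> i ` chains \<Delta> i :: ('a set \<Rightarrow> int) set)
           = laplacian \<Delta> i ` chains_on (faces \<Delta> i - faces \<Upsilon> i)"
proof -
  note K = assms(1)
  have UK: "simplicial_complex \<Upsilon>" and Usub: "\<Upsilon> \<subseteq> skel \<Delta> i"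
    and sk: "skel \<Upsilon> (i - 1) = skel (skel \<Delta> i) (i - 1)"
    and hvi: "homology_vanishes TYPE(int) \<Upsilon> i"
    using assms(5) unfolding spanning_tree_def by auto
  have hvm: "homology_vanishes TYPE(int) \<Upsilon> (i - 1)" by (rule assms(6))
  have F1: "faces \<Upsilon> (i + 1) = {}"
  proof -
    have "int (card F) \<le> i + 1" if "F \<in> \<Upsilon>" for F using that Usub unfolding skel_def by auto
    then show ?thesis unfolding faces_def by force
  qed
  have F2: "faces \<Upsilon> (i - 1) = faces \<Delta> (i - 1)"
  proof -
    have e1: "F \<in> faces \<Upsilon> (i - 1) \<longleftrightarrow> F \<in> skel \<Upsilon> (i - 1) \<and> int (card F) = i" for F
      unfolding faces_def skel_def by auto
    have e2: "F \<in> faces \<Delta> (i - 1) \<longleftrightarrow> F \<in> skel (skel \<Delta> i) (i - 1) \<and> int (card F) = i" for F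
      unfolding faces_def skel_def by auto
    show ?thesis using e1 e2 sk by blast
  qed
  have F3: "faces \<Upsilon> i \<subseteq> faces \<Delta> i" using Usub unfolding faces_def skel_def by auto
  define J where "J = faces \<Upsilon> i"
  define S where "S = faces \<Delta> (i - 1)"
  have fJ: "finite J" unfolding J_def by (rule finite_faces[OF UK])
  have fS: "finite S" unfolding S_def by (rule finite_faces[OF K])
  define a :: "'a set \<Rightarrow> 'a set \<Rightarrow> int" where
    "a F G = (if G \<in> S \<and> G \<subseteq> F then sgn_face F G else 0)" for F G
  have sum_a: "(\<Sum>F\<in>J. c F * a F G) = bd \<Upsilon> i c G" for c G
  proof (cases "G \<in> S")
    case True
    have "(\<Sum>F\<in>J. c F * a F G) = (\<Sum>F\<in>J. if G \<subseteq> F then sgn_face F G * c F else 0)"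
      unfolding a_def using True by (intro sum.cong) auto
    also have "\<dots> = (\<Sum>F\<in>{F \<in> J. G \<subseteq> F}. sgn_face F G * c F)"
      using fJ by (simp add: sum.inter_filter)
    also have "\<dots> = bd \<Upsilon> i c G"
      unfolding bd_def J_def using True F2 S_def by simp
    finally show ?thesis .
  next
    case False
    then show ?thesis unfolding a_def bd_def using F2 S_def by simp
  qed
  have spa: "supp S J a" unfolding supp_def a_def by auto
  have inda: "indep J a" unfolding indep_def
  proof (intro allI impI ballI)
    fix c F assume h: "\<forall>y. (\<Sum>F\<in>J. c F * a F y) = 0" and F: "F \<in> J"
    define c0 where "c0 G = (if G \<in> J then c G else 0)" for G
    have "bd \<Upsilon> i c0 = bd \<Upsilon> i c" by (rule bd_cong) (simp add: c0_def J_def)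
    then have bd0: "bd \<Upsilon> i c0 = (\<lambda>_. 0)" using h sum_a by auto
    have "c0 \<in> chains \<Upsilon> i" unfolding chains_def chains_on_def c0_def J_def by simp
    then have "c0 \<in> (cycles \<Upsilon> i :: ('a set \<Rightarrow> int) set)" unfolding cycles_def using bd0 by simp
    then have "c0 \<in> (boundaries \<Upsilon> i :: ('a set \<Rightarrow> int) set)"
      using hvi unfolding homology_vanishes_def by simp
    then obtain z :: "'a set \<Rightarrow> int" where "c0 = bd \<Upsilon> (i + 1) z"
      unfolding boundaries_def by auto
    then have "c0 = (\<lambda>_. 0)" unfolding bd_def using F1 by auto
    then have "c0 F = 0" by simp
    then show "c F = 0" using F unfolding c0_def by simp
  qed
  have pua: "purev J a" unfolding purev_def
  proof (intro allI impI)
    fix k x c assume k: "(k::int) \<noteq> 0" and h: "\<forall>y. k * x y = (\<Sum>F\<in>J. c F * a F y)"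
    have kx: "(\<lambda>y. k * x y) = bd \<Upsilon> i c" using h sum_a by auto
    have "x \<in> chains \<Upsilon> (i - 1)" unfolding chains_def chains_on_def
    proof (intro CollectI allI impI)
      fix G assume "G \<notin> faces \<Upsilon> (i - 1)"
      then have "bd \<Upsilon> i c G = 0" unfolding bd_def by simp
      then show "x G = 0" using fun_cong[OF kx, of G] k by simp
    qed
    moreover have "bd \<Upsilon> (i - 1) x = (\<lambda>_. 0)"
    proof
      fix G
      have "k * bd \<Upsilon> (i - 1) x G = bd \<Upsilon> (i - 1) (\<lambda>y. k * x y) G" by (simp add: bd_scale)
      also have "\<dots> = 0" unfolding kx by (rule bd_bd[OF UK])
      finally show "bd \<Upsilon> (i - 1) x G = 0" using k by simp
    qed
    ultimately have "x \<in> (cycles \<Upsilon> (i - 1) :: ('a set \<Rightarrow> int) set)" unfolding cycles_def by simp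
    then have "x \<in> (boundaries \<Upsilon> (i - 1) :: ('a set \<Rightarrow> int) set)"
      using hvm unfolding homology_vanishes_def by simp
    then obtain z :: "'a set \<Rightarrow> int" where "x = bd \<Upsilon> i z"
      unfolding boundaries_def by auto
    then have "\<forall>y. x y = (\<Sum>F\<in>J. z F * a F y)" using sum_a by simp
    then show "\<exists>c'. \<forall>y. x y = (\<Sum>F\<in>J. c' F * a F y)" by blast
  qed
  obtain w where w: "\<forall>F\<in>J. \<forall>l\<in>J. pr S (w F) (a l) = (if F = l then 1 else 0)"
    using dual_basis[OF fJ fS spa inda pua] by blast
  have pr_cobd: "pr S b (a l) = cobd \<Delta> i b l" if l: "l \<in> J" for b l
  proof -
    have lD: "l \<in> faces \<Delta> i" using l F3 J_def by auto
    have "pr S b (a l) = (\<Sum>G\<in>S. if G \<subseteq> l then sgn_face l G * b G else 0)"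
      unfolding pr_def a_def by (intro sum.cong) auto
    also have "\<dots> = (\<Sum>G\<in>{G \<in> S. G \<subseteq> l}. sgn_face l G * b G)"
      using fS by (simp add: sum.inter_filter)
    also have "\<dots> = cobd \<Delta> i b l" unfolding cobd_def S_def using lD by simp
    finally show ?thesis .
  qed
  show ?thesis
  proof
    show "laplacian \<Delta> i ` chains_on (faces \<Delta> i - faces \<Upsilon> i) \<subseteq> (laplacian \<Delta> i ` chains \<Delta> i :: ('a set \<Rightarrow> int) set)"
      by (rule image_mono) (auto simp: chains_def chains_on_def)
  next
    show "(laplacian \<Delta> i ` chains \<Delta> i :: ('a set \<Rightarrow> int) set) \<subseteq> laplacian \<Delta> i ` chains_on (faces \<Delta> i - faces \<Upsilon> i)"
    proof
      fix y :: "'a set \<Rightarrow> int" assume "y \<in> laplacian \<Delta> i ` chains \<Delta> i"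
      then obtain c :: "'a set \<Rightarrow> int" where c: "c \<in> chains \<Delta> i" and y: "y = laplacian \<Delta> i c" by auto
      define B where "B G = (\<Sum>F\<in>J. c F * w F G)" for G
      define c' where "c' H = c H - cobd \<Delta> i B H" for H
      have cB: "cobd \<Delta> i B H = c H" if H: "H \<in> J" for H
      proof -
        have "cobd \<Delta> i B H = (\<Sum>F\<in>J. c F * cobd \<Delta> i (w F) H)"
          unfolding B_def by (rule cobd_sum)
        also have "\<dots> = (\<Sum>F\<in>J. if F = H then c F else 0)"
        proof (rule sum.cong[OF refl])
          fix F assume F: "F \<in> J"
          have "cobd \<Delta> i (w F) H = (if F = H then 1 else 0)"
            using pr_cobd[OF H, of "w F"] w F H by simp
          then show "c F * cobd \<Delta> i (w F) H = (if F = H then c F else 0)" by simp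
        qed
        also have "\<dots> = c H" using fJ H by (simp add: sum.delta')
        finally show ?thesis .
      qed
      have "c' \<in> chains_on (faces \<Delta> i - faces \<Upsilon> i)" unfolding chains_on_def
      proof (intro CollectI allI impI)
        fix H assume H: "H \<notin> faces \<Delta> i - faces \<Upsilon> i"
        show "c' H = 0"
        proof (cases "H \<in> J")
          case True then show ?thesis unfolding c'_def using cB by simp
        next
          case False
          then have "H \<notin> faces \<Delta> i" using H J_def by auto
          then show ?thesis using c unfolding c'_def cobd_def chains_def chains_on_def by simp
        qed
      qed
      moreover have "laplacian \<Delta> i c' = laplacian \<Delta> i c"
      proof -
        have "cobd \<Delta> (i + 1) c' = cobd \<Delta> (i + 1) c"
        proof
          fix F
          show "cobd \<Delta> (i + 1) c' F = cobd \<Delta> (i + 1) c F"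
            unfolding c'_def cobd_minus using cobd_cobd[OF K, of i B F] by simp
        qed
        then show ?thesis unfolding laplacian_def by simp
      qed
      ultimately show "y \<in> laplacian \<Delta> i ` chains_on (faces \<Delta> i - faces \<Upsilon> i)"
        using y by (metis image_eqI)
    qed
  qed
qed

end
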